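(* Let $K\ge2$ and let $H:\mathbb{R}^K\to\mathbb{R}$ satisfy (A1)–(A4) below at $\theta^*\in\Delta_{K-1}$, where the coordinates are labelled so that $\theta^*_1=\dots=\theta^*_m=0$ and $\theta^*_{m+1},\dots,\theta^*_K>0$. Let $\tilde\Delta_{K-1}=\{y\in\mathbb{R}^{K-1}:y_i\ge0,\sum_{i=1}^{K-1}y_i\le1\}$ and $T:\tilde\Delta_{K-1}\to\Delta_{K-1}$, $T(y)=(y_1,\dots,y_{K-1},1-\sum_{i=1}^{K-1}y_i)$. Then there exist $c_1,c_2>0$ such that for all $y\in\tilde\Delta_{K-1}$, $$H(T(y))\le H(\theta^* )-c_1\sum_{i=1}^m|y_i-\theta^*_i|-c_2\sum_{i=m+1}^{K-1}|y_i-\theta^*_i|^2.$$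
   Context: $\Delta_{K-1}=\{\theta\in\mathbb{R}^K:\theta_i\ge0,\sum_i\theta_i=1\}$. With $Z=\{1,\dots,m\}$: (A1) $H$ attains its maximum over $\Delta_{K-1}$ only at $\theta^*$. (A2) $H$ is continuous on $\Delta_{K-1}$ and $C^2$ on an open neighborhood of $\theta^*$ in $\mathbb{R}^K$. There are unique KKT multipliers $\lambda_i\ge0$ ($i\le m$), $\mu\in\mathbb{R}$ with $\nabla H(\theta^* )=-\sum_{i=1}^m\lambda_ie_i+\mu\mathbf{1}_K$. (A3) $\lambda_i>0$ for $i\le m$. (A4) $d^\top\nabla^2H(\theta^* )d<0$ for all nonzero $d\in\mathbb{R}^K$ with $\mathbf{1}_K^\top d=0$ and $d_1=\dots=d_m=0$. *)

theory Defs
  imports "HOL-Analysis.Analysis"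
begin

definition prob_simplex :: "(real^'n) set" where
  "prob_simplex = {\<theta>. (\<forall>i. \<theta> $ i \<ge> 0) \<and> (\<Sum>i\<in>UNIV. \<theta> $ i) = 1}"

definition C2_with :: "(real^'n) set \<Rightarrow> (real^'n \<Rightarrow> real)
    \<Rightarrow> (real^'n \<Rightarrow> ((real^'n) \<Rightarrow>\<^sub>L real))
    \<Rightarrow> (real^'n \<Rightarrow> ((real^'n) \<Rightarrow>\<^sub>L ((real^'n) \<Rightarrow>\<^sub>L real))) \<Rightarrow> bool" where
  "C2_with U H Df D2f \<longleftrightarrow>
     (\<forall>x\<in>U. (H has_derivative blinfun_apply (Df x)) (at x)) \<and>
     (\<forall>x\<in>U. (Df has_derivative blinfun_apply (D2f x)) (at x)) \<and>
     continuous_on U D2f"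

text \<open>Coordinates of R^K are labelled 1..K via a bijection e :: nat => 'n from {1..K}.
  A point y of R^(K-1) is a function nat => real, of which only y 1, ..., y (K-1) matter.\<close>
definition Tmap :: "(nat \<Rightarrow> 'n) \<Rightarrow> nat \<Rightarrow> (nat \<Rightarrow> real) \<Rightarrow> real^'n" where
  "Tmap e K y = (\<chi> j. if j = e K then 1 - (\<Sum>i=1..K-1. y i) else y (inv_into {1..K} e j))"

end

theory Submission
  imports Defs
begin



lemma taylor2:
  fixes H :: "real^'n \<Rightarrow> real"
  assumes C2: "C2_with U H Df D2f" and seg: "\<forall>t\<in>{0..1}. x + t *\<^sub>R d \<in> U" and U: "open U"
  shows "\<exists>t\<in>{0..1}. H (x + d) = H x + Df x d + 1/2 * D2f (x + t *\<^sub>R d) d d"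
proof -
  define g where "g = (\<lambda>t::real. H (x + t *\<^sub>R d))"
  define g1 where "g1 = (\<lambda>t::real. blinfun_apply (Df (x + t *\<^sub>R d)) d)"
  define g2 where "g2 = (\<lambda>t::real. blinfun_apply (blinfun_apply (D2f (x + t *\<^sub>R d)) d) d)"
  define diff where "diff = (\<lambda>k::nat. if k = 0 then g else if k = 1 then g1 else g2)"
  have lin: "((\<lambda>t::real. x + t *\<^sub>R d) has_derivative (\<lambda>h. h *\<^sub>R d)) (at t)" for t
    by (auto intro!: derivative_eq_intros)
  have d1: "DERIV g t :> g1 t" if "t \<in> {0..1}" for t
  proof -
    have "x + t *\<^sub>R d \<in> U" using seg that by auto
    then have "(H has_derivative blinfun_apply (Df (x + t *\<^sub>R d))) (at (x + t *\<^sub>R d))"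
      using C2 unfolding C2_with_def by auto
    from diff_chain_at[OF lin this]
    have "(g has_derivative (\<lambda>h. blinfun_apply (Df (x + t *\<^sub>R d)) (h *\<^sub>R d))) (at t)"
      unfolding g_def o_def by simp
    moreover have "(\<lambda>h. blinfun_apply (Df (x + t *\<^sub>R d)) (h *\<^sub>R d)) = (*) (g1 t)"
      by (auto simp: fun_eq_iff g1_def blinfun.scaleR_right)
    ultimately show ?thesis unfolding has_field_derivative_def by simp
  qed
  have d2: "DERIV g1 t :> g2 t" if "t \<in> {0..1}" for t
  proof -
    have "x + t *\<^sub>R d \<in> U" using seg that by auto
    then have "(Df has_derivative blinfun_apply (D2f (x + t *\<^sub>R d))) (at (x + t *\<^sub>R d))"
      using C2 unfolding C2_with_def by auto
    from diff_chain_at[OF lin this]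
    have "((\<lambda>t. Df (x + t *\<^sub>R d)) has_derivative (\<lambda>h. blinfun_apply (D2f (x + t *\<^sub>R d)) (h *\<^sub>R d))) (at t)"
      unfolding o_def by simp
    then have "((\<lambda>t. blinfun_apply (Df (x + t *\<^sub>R d)) d) has_derivative (\<lambda>h. blinfun_apply (blinfun_apply (D2f (x + t *\<^sub>R d)) (h *\<^sub>R d)) d)) (at t)"
      by (auto intro!: derivative_eq_intros)
    moreover have "(\<lambda>h. blinfun_apply (blinfun_apply (D2f (x + t *\<^sub>R d)) (h *\<^sub>R d)) d) = (*) (g2 t)"
      by (auto simp: fun_eq_iff g2_def blinfun.scaleR_right blinfun.scaleR_left)
    ultimately show ?thesis unfolding has_field_derivative_def g1_def by simp
  qed
  have "\<forall>k t. k < 2 \<and> 0 \<le> t \<and> t \<le> 1 \<longrightarrow> DERIV (diff k) t :> diff (Suc k) t"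
    using d1 d2 by (auto simp: diff_def less_2_cases_iff)
  from Taylor_up[of 2 diff g 0 1 0, OF _ _ this] obtain t where
    t: "0 < t" "t < 1" "g 1 = (\<Sum>k<2. diff k 0 / fact k * (1 - 0) ^ k) + diff 2 t / fact 2 * (1 - 0) ^ 2"
    by (auto simp: diff_def)
  have "g 1 = g 0 + g1 0 + 1/2 * g2 t" using t(3) by (simp add: diff_def numeral_2_eq_2)
  then show ?thesis using t(1,2) by (intro bexI[of _ t]) (auto simp: g_def g1_def g2_def)
qed



lemma neg_def_uniform:
  fixes A :: "(real^('n::finite)) \<Rightarrow>\<^sub>L ((real^'n) \<Rightarrow>\<^sub>L real)" and S :: "(real^'n) set"
  assumes cl: "closed S" and sc: "\<And>v c. v \<in> S \<Longrightarrow> c *\<^sub>R v \<in> S"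
    and neg: "\<forall>v\<in>S. v \<noteq> 0 \<longrightarrow> A v v < 0"
  shows "\<exists>\<kappa>>0. \<forall>v\<in>S. A v v \<le> -\<kappa> * (norm v)^2"
proof (cases "S \<inter> sphere 0 1 = {}")
  case True
  have "v = 0" if "v \<in> S" for v
  proof (rule ccontr)
    assume "v \<noteq> 0"
    then have "(1 / norm v) *\<^sub>R v \<in> S \<inter> sphere 0 1" using sc[OF that] by auto
    then show False using True by auto
  qed
  show ?thesis
  proof (intro exI[of _ 1] conjI ballI)
    fix v assume "v \<in> S"
    then have "v = 0" by fact
    then show "A v v \<le> - 1 * (norm v)^2" by simp
  qed simp
next
  case False
  have "compact (S \<inter> sphere 0 1)" using cl by (intro closed_Int_compact) auto
  moreover have "continuous_on (S \<inter> sphere 0 1) (\<lambda>v. A v v)"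
    by (intro continuous_intros)
  ultimately have cim: "compact ((\<lambda>v. A v v) ` (S \<inter> sphere 0 1))"
    by (rule compact_continuous_image[rotated])
  have "(\<lambda>v. A v v) ` (S \<inter> sphere 0 1) \<noteq> {}" using False by blast
  from compact_attains_sup[OF cim this] obtain z where
    z: "z \<in> (\<lambda>v. A v v) ` (S \<inter> sphere 0 1)" "\<forall>y\<in>(\<lambda>v. A v v) ` (S \<inter> sphere 0 1). y \<le> z"
    by blast
  from z(1) obtain v0 where v0a: "v0 \<in> S \<inter> sphere 0 1" "z = A v0 v0" by blast
  have v0: "v0 \<in> S \<inter> sphere 0 1" "\<forall>v\<in>S \<inter> sphere 0 1. A v v \<le> A v0 v0"
    using v0a z(2) by auto
  have neg0: "A v0 v0 < 0" using neg v0(1) by auto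
  show ?thesis
  proof (intro exI[of _ "- A v0 v0"] conjI ballI)
    show "0 < - A v0 v0" using neg0 by simp
    fix v assume v: "v \<in> S"
    show "A v v \<le> - (- A v0 v0) * (norm v)^2"
    proof (cases "v = 0")
      case True then show ?thesis by simp
    next
      case False
      let ?u = "(1 / norm v) *\<^sub>R v"
      have "?u \<in> S \<inter> sphere 0 1" using sc[OF v] False by auto
      then have "A ?u ?u \<le> A v0 v0" using v0(2) by auto
      moreover have "A ?u ?u = A v v / (norm v)^2"
        by (simp add: blinfun.scaleR_left blinfun.scaleR_right power2_eq_square)
      ultimately have "A v v / (norm v)^2 \<le> A v0 v0" by simp
      then show ?thesis using False by (simp add: divide_le_eq mult.commute)
    qed
  qed
qed


lemma closed_S:
  fixes e :: "nat \<Rightarrow> 'n::finite"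
  shows "closed {v::real^'n::finite. (\<Sum>j\<in>UNIV. v $ j) = 0 \<and> (\<forall>i\<in>{1..m}. v $ e i = 0)}"
proof -
  have eq: "{v::real^'n. (\<Sum>j\<in>UNIV. v $ j) = 0 \<and> (\<forall>i\<in>{1..m}. v $ e i = 0)}
     = {v. (\<Sum>j\<in>UNIV. v $ j) = 0} \<inter> (\<Inter>i\<in>{1..m}. {v. v $ e i = 0})" by blast
  have c1: "closed {v::real^'n. (\<Sum>j\<in>UNIV. v $ j) = 0}"
    by (rule closed_Collect_eq) (intro continuous_intros)+
  have c2: "closed {v::real^'n. v $ e i = 0}" for i
    by (rule closed_Collect_eq) (intro continuous_intros)+
  have "closed (\<Inter>i\<in>{1..m}. {v::real^'n. v $ e i = 0})"
    using c2 by blast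
  with c1 show ?thesis unfolding eq by (rule closed_Int)
qed

lemma blinfun_expand:
  fixes f :: "(real^('n::finite)) \<Rightarrow>\<^sub>L real"
  shows "f d = (\<Sum>j\<in>UNIV. d $ j * f (axis j 1))"
proof -
  have "f d = f (\<Sum>j\<in>UNIV. d $ j *\<^sub>R axis j 1)"
    using basis_expansion[of d] by (simp add: scalar_mult_eq_scaleR)
  also have "\<dots> = (\<Sum>j\<in>UNIV. d $ j * f (axis j 1))"
    by (simp add: blinfun.sum_right blinfun.scaleR_right)
  finally show ?thesis .
qed


lemma bil_bound:
  fixes A :: "'a::real_normed_vector \<Rightarrow>\<^sub>L ('b::real_normed_vector \<Rightarrow>\<^sub>L real)"
  shows "\<bar>A x y\<bar> \<le> norm A * norm x * norm y"
proof -
  have "\<bar>A x y\<bar> \<le> norm (A x) * norm y" using norm_blinfun[of "A x" y] by simp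
  also have "\<dots> \<le> norm A * norm x * norm y"
    by (intro mult_right_mono norm_blinfun) auto
  finally show ?thesis .
qed

lemma final_arith:
  fixes ka Mm lm ss xw xr xd ht h0 ll qp qd ff kr :: real
  assumes "ka > 0" "Mm \<ge> 0" "lm > 0" "ss \<ge> 0" "xw \<ge> 0" "xr \<ge> 0" "xd \<ge> 0" "kr \<ge> 0"
    and "ht = h0 + ll + 1/2 * qp" "ll \<le> -lm * ss" "qp \<le> qd + ka/4 * xd^2"
    and "qd \<le> -ka * xw^2 + 2 * Mm * xw * xr + Mm * xr^2"
    and "xr \<le> 2 * ss" "xd \<le> xw + xr" "xw \<le> xd + xr" "ss \<le> kr * xd"
    and "(2 * Mm * (1+2 * kr) + (2 * Mm+ka) * kr) * xd \<le> lm/2"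
    and "ff \<le> xw^2"
  shows "ht \<le> h0 - lm/2 * ss - ka/4 * ff"
proof -
  have nd2: "xd^2 \<le> 2 * xw^2 + 2 * xr^2"
  proof -
    have "xd^2 \<le> (xw+xr)^2" using assms by (intro power_mono) auto
    also have "\<dots> = 2 * xw^2 + 2 * xr^2 - (xw - xr)^2" by (simp add: power2_eq_square algebra_simps)
    also have "\<dots> \<le> 2 * xw^2 + 2 * xr^2" by simp
    finally show ?thesis .
  qed
  have A: "1/2 * qp \<le> -ka/4 * xw^2 + Mm * xw * xr + (Mm/2 + ka/4) * xr^2"
  proof -
    have "ka/4 * xd^2 \<le> ka/4 * (2 * xw^2 + 2 * xr^2)" using nd2 assms(1) by (intro mult_left_mono) auto
    then show ?thesis using assms(11,12) by (simp add: algebra_simps)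
  qed
  have B: "Mm * xw * xr \<le> 2 * Mm * xw * ss"
  proof -
    have "(Mm * xw) * xr \<le> (Mm * xw) * (2 * ss)" using assms by (intro mult_left_mono) auto
    then show ?thesis by (simp add: algebra_simps)
  qed
  have C: "xr^2 \<le> 4 * ss^2"
  proof -
    have "xr^2 \<le> (2 * ss)^2" using assms by (intro power_mono) auto
    then show ?thesis by (simp add: power2_eq_square)
  qed
  have C2: "(Mm/2 + ka/4) * xr^2 \<le> (Mm/2 + ka/4) * (4 * ss^2)"
    using C assms by (intro mult_left_mono) auto
  have nwb: "xw \<le> (1 + 2 * kr) * xd" using assms by (simp add: algebra_simps)
  have D: "2 * Mm * xw + (2 * Mm+ka) * ss \<le> (2 * Mm * (1+2 * kr) + (2 * Mm+ka) * kr) * xd"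
  proof -
    have "2 * Mm * xw \<le> 2 * Mm * ((1 + 2 * kr) * xd)" using nwb assms by (intro mult_left_mono) auto
    moreover have "(2 * Mm+ka) * ss \<le> (2 * Mm+ka) * (kr * xd)" using assms by (intro mult_left_mono) auto
    ultimately show ?thesis by (simp add: algebra_simps)
  qed
  have E: "ss * (2 * Mm * xw + (2 * Mm+ka) * ss) \<le> ss * (lm/2)"
    using D assms by (intro mult_left_mono) auto
  have Fb: "ka/4 * ff \<le> ka/4 * xw^2" using assms by (intro mult_left_mono) auto
  have E': "2 * Mm * xw * ss + (2 * Mm+ka) * ss^2 \<le> lm/2 * ss" using E by (simp add: algebra_simps power2_eq_square)
  have C2': "(Mm/2 + ka/4) * (4 * ss^2) = (2 * Mm+ka) * ss^2" by (simp add: algebra_simps)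
  have B': "2 * Mm * xw * ss = 2 * Mm * xw * ss" by simp
  show ?thesis using A B C2 C2' E' Fb assms(9,10) by linarith
qed


lemma local_bound:
  fixes H :: "real^'n::finite \<Rightarrow> real" and \<theta>s :: "real^'n"
    and e :: "nat \<Rightarrow> 'n" and K m :: nat
  assumes K: "CARD('n) = K" "K \<ge> 2"
    and e: "bij_betw e {1..K} UNIV"
    and mK: "m < K"
    and th_simplex: "\<theta>s \<in> prob_simplex"
    and th_zero: "\<forall>i\<in>{1..m}. \<theta>s $ e i = 0"
    and U: "open U" "\<theta>s \<in> U" and C2: "C2_with U H Df D2f"
    and lam: "\<forall>i\<in>{1..m}. lam i > 0"
    and Dl: "\<forall>i\<in>{1..m}. blinfun_apply (Df \<theta>s) (axis (e i) 1) = - lam i + \<mu>"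
    and Dm: "\<forall>i\<in>{m+1..K}. blinfun_apply (Df \<theta>s) (axis (e i) 1) = \<mu>"
    and neg: "\<forall>d::(real^'n).  d \<noteq> 0 \<and> (\<Sum>j\<in>UNIV. d $ j) = 0 \<and> (\<forall>i\<in>{1..m}. d $ e i = 0)
           \<longrightarrow> blinfun_apply (blinfun_apply (D2f \<theta>s) d) d < 0"
  shows "\<exists>r>0. \<exists>a>0. \<exists>b>0. \<forall>\<theta>\<in>prob_simplex. norm (\<theta> - \<theta>s) < r \<longrightarrow>
     H \<theta> \<le> H \<theta>s - a * (\<Sum>i=1..m. \<theta> $ e i) - b * (\<Sum>i=m+1..K-1. (\<theta> $ e i - \<theta>s $ e i)^2)"
proof -
  define S where "S = {v::real^'n. (\<Sum>j\<in>UNIV. v $ j) = 0 \<and> (\<forall>i\<in>{1..m}. v $ e i = 0)}"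
  define Q where "Q = D2f \<theta>s"
  have "\<exists>\<kappa>>0. \<forall>v\<in>S. Q v v \<le> -\<kappa> * (norm v)^2"
  proof (rule neg_def_uniform)
    show "closed S" unfolding S_def by (rule closed_S)
    show "c *\<^sub>R v \<in> S" if "v \<in> S" for v c
      using that unfolding S_def by (simp add: sum_distrib_left[symmetric])
    show "\<forall>v\<in>S. v \<noteq> 0 \<longrightarrow> Q v v < 0" using neg unfolding S_def Q_def by blast
  qed
  then obtain \<kappa> where kap: "\<kappa> > 0" "\<forall>v\<in>S. Q v v \<le> -\<kappa> * (norm v)^2" by blast
  define lmin where "lmin = Min (insert 1 (lam ` {1..m}))"
  have l0: "lmin > 0" unfolding lmin_def using lam by (subst Min_gr_iff) auto
  have l0le: "lmin \<le> lam i" if "i \<in> {1..m}" for i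
    unfolding lmin_def using that by (intro Min_le) auto
  define M where "M = norm Q"
  have M0: "M \<ge> 0" unfolding M_def by simp
  define \<epsilon> where "\<epsilon> = \<kappa> / 4"
  have eps: "\<epsilon> > 0" using kap unfolding \<epsilon>_def by simp
  obtain r1 where r1: "r1 > 0" "ball \<theta>s r1 \<subseteq> U" using U open_contains_ball by blast
  have "isCont D2f \<theta>s" using C2 U unfolding C2_with_def
    using continuous_on_eq_continuous_at by blast
  then obtain r2 where r2: "r2 > 0" "\<forall>p. dist p \<theta>s < r2 \<longrightarrow> dist (D2f p) (D2f \<theta>s) < \<epsilon>"
    unfolding continuous_at_eps_delta using eps by blast
  define N where "N = 2*M*(1+2*K) + (2*M+\<kappa>)*K"
  have N0: "N \<ge> 0" unfolding N_def using M0 kap by simp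
  define r3 where "r3 = lmin / (2*(N+1))"
  have r3: "r3 > 0" unfolding r3_def using l0 N0 by simp
  have Nr3: "N * r3 \<le> lmin / 2"
  proof -
    have "N * r3 = lmin / 2 * (N / (N+1))" unfolding r3_def using N0 by (simp add: field_simps)
    also have "\<dots> \<le> lmin / 2 * 1" using N0 l0 by (intro mult_left_mono) auto
    finally show ?thesis by simp
  qed
  define r where "r = min r1 (min r2 r3)"
  have r: "r > 0" "r \<le> r1" "r \<le> r2" "r \<le> r3" unfolding r_def using r1 r2 r3 by auto
  have inj: "inj_on e {1..K}" using e bij_betw_def by blast
  have eK: "e K \<noteq> e i" if "i \<in> {1..m}" for i
  proof -
    have "i \<in> {1..K}" "K \<in> {1..K}" "K \<noteq> i" using that mK K(2) by auto
    then show ?thesis using inj_on_contraD[OF inj] by blast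
  qed
  have main: "\<forall>\<theta>\<in>prob_simplex. norm (\<theta> - \<theta>s) < r \<longrightarrow>
     H \<theta> \<le> H \<theta>s - lmin / 2 * (\<Sum>i=1..m. \<theta> $ e i) - \<kappa> / 4 * (\<Sum>i=m+1..K-1. (\<theta> $ e i - \<theta>s $ e i)^2)"
  proof (intro ballI impI)
    fix \<theta> assume th: "\<theta> \<in> prob_simplex" "norm (\<theta> - \<theta>s) < r"
    define d where "d = \<theta> - \<theta>s"
    have sumd: "(\<Sum>j\<in>UNIV. d $ j) = 0"
      using th(1) th_simplex unfolding d_def prob_simplex_def by (simp add: sum_subtractf)
    have dpos: "d $ e i = \<theta> $ e i" "d $ e i \<ge> 0" if "i \<in> {1..m}" for i
      using th_zero that th(1) unfolding d_def prob_simplex_def by auto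
    define s where "s = (\<Sum>i=1..m. d $ e i)"
    have s_eq: "s = (\<Sum>i=1..m. \<theta> $ e i)" unfolding s_def using dpos by simp
    have s0: "s \<ge> 0" unfolding s_def using dpos by (intro sum_nonneg) auto
    define rv where "rv = (\<Sum>i\<in>{1..m}. d $ e i *\<^sub>R (axis (e i) (1::real) - axis (e K) 1))"
    have rv_comp: "rv $ j = (\<Sum>i\<in>{1..m}. d $ e i * ((if j = e i then 1 else 0) - (if j = e K then 1 else 0)))" for j
      unfolding rv_def by (simp add: axis_def)
    have rv_ei: "rv $ e i0 = d $ e i0" if i0: "i0 \<in> {1..m}" for i0
    proof -
      have "rv $ e i0 = (\<Sum>i\<in>{1..m}. if i = i0 then d $ e i else 0)"
        unfolding rv_comp
      proof (rule sum.cong)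
        fix i assume i: "i \<in> {1..m}"
        have "(e i0 = e i) = (i0 = i)" using inj_onD[OF inj, of i0 i] i i0 mK by auto
        then show "d $ e i * ((if e i0 = e i then 1 else 0) - (if e i0 = e K then 1 else 0)) = (if i = i0 then d $ e i else 0)"
          using eK[OF i0] by auto
      qed simp
      also have "\<dots> = d $ e i0" using i0 by simp
      finally show ?thesis .
    qed
    have rv_free: "rv $ e i0 = 0" if i0: "i0 \<in> {m+1..K-1}" for i0
    proof -
      have "i0 \<in> {1..K}" "K \<in> {1..K}" "i0 \<noteq> K" using i0 mK K(2) by auto
      then have "e i0 \<noteq> e K" using inj_on_contraD[OF inj] by blast
      moreover have "e i0 \<noteq> e i" if "i \<in> {1..m}" for i
      proof -
        have "i0 \<in> {1..K}" "i \<in> {1..K}" "i0 \<noteq> i" using i0 that mK by auto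
        then show ?thesis using inj_on_contraD[OF inj] by blast
      qed
      ultimately show ?thesis unfolding rv_comp by (intro sum.neutral) auto
    qed
    have sum_rv: "(\<Sum>j\<in>UNIV. rv $ j) = 0"
    proof -
      have "(\<Sum>j\<in>UNIV. rv $ j) = (\<Sum>i\<in>{1..m}. \<Sum>j\<in>UNIV. d $ e i * ((if j = e i then 1 else 0) - (if j = e K then 1 else 0)))"
        unfolding rv_comp by (rule sum.swap)
      also have "\<dots> = (\<Sum>i\<in>{1..m}. d $ e i * ((\<Sum>j\<in>UNIV. (if j = e i then 1 else 0)) - (\<Sum>j\<in>UNIV. (if j = e K then 1 else 0))))"
        by (simp add: sum_distrib_left[symmetric] sum_subtractf)
      also have "\<dots> = 0" by simp
      finally show ?thesis .
    qed
    have norm_rv: "norm rv \<le> 2 * s"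
    proof -
      have "norm rv \<le> (\<Sum>i\<in>{1..m}. norm (d $ e i *\<^sub>R (axis (e i) (1::real) - axis (e K) 1)))"
        unfolding rv_def by (rule norm_sum)
      also have "\<dots> \<le> (\<Sum>i\<in>{1..m}. d $ e i * 2)"
      proof (rule sum_mono)
        fix i assume i: "i \<in> {1..m}"
        have "norm (axis (e i) (1::real) - axis (e K) 1) \<le> norm (axis (e i) (1::real)) + norm (axis (e K) (1::real))"
          by (rule norm_triangle_ineq4)
        then have "norm (axis (e i) (1::real) - axis (e K) 1) \<le> 2" by simp
        then show "norm (d $ e i *\<^sub>R (axis (e i) (1::real) - axis (e K) 1)) \<le> d $ e i * 2"
          using dpos(2)[OF i] by (simp add: mult_left_mono)
      qed
      also have "\<dots> = 2 * s" unfolding s_def by (simp add: sum_distrib_left mult.commute)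
      finally show ?thesis .
    qed
    define w where "w = d - rv"
    have wS: "w \<in> S" unfolding S_def w_def using sumd sum_rv rv_ei
      by (simp add: sum_subtractf)
    have Qw: "Q w w \<le> -\<kappa> * (norm w)^2" using kap(2) wS by blast
    have w_free: "w $ e i = \<theta> $ e i - \<theta>s $ e i" if "i \<in> {m+1..K-1}" for i
      unfolding w_def d_def using rv_free[OF that] by simp
    have free_le: "(\<Sum>i=m+1..K-1. (\<theta> $ e i - \<theta>s $ e i)^2) \<le> (norm w)^2"
    proof -
      have "(\<Sum>i=m+1..K-1. (\<theta> $ e i - \<theta>s $ e i)^2) = (\<Sum>i=m+1..K-1. (w $ e i)^2)"
        using w_free by simp
      also have "\<dots> = (\<Sum>j\<in>e ` {m+1..K-1}. (w $ j)^2)"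
        by (rule sum.reindex[symmetric, unfolded o_def]) (rule inj_on_subset[OF inj], auto)
      also have "\<dots> \<le> (\<Sum>j\<in>UNIV. (w $ j)^2)" by (rule sum_mono2) auto
      also have "\<dots> = (norm w)^2" unfolding norm_vec_def L2_set_def
        by (simp add: sum_nonneg)
      finally show ?thesis .
    qed
    have first: "blinfun_apply (Df \<theta>s) d = - (\<Sum>i=1..m. lam i * d $ e i)"
    proof -
      have "blinfun_apply (Df \<theta>s) d = (\<Sum>j\<in>UNIV. d $ j * Df \<theta>s (axis j 1))" by (rule blinfun_expand)
      also have "\<dots> = (\<Sum>i\<in>{1..K}. d $ e i * Df \<theta>s (axis (e i) 1))"
        by (rule sum.reindex_bij_betw[OF e, symmetric])
      also have "\<dots> = (\<Sum>i\<in>{1..K}. \<mu> * d $ e i - (if i \<in> {1..m} then lam i * d $ e i else 0))"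
      proof (rule sum.cong)
        fix i assume i: "i \<in> {1..K}"
        show "d $ e i * Df \<theta>s (axis (e i) 1) = \<mu> * d $ e i - (if i \<in> {1..m} then lam i * d $ e i else 0)"
        proof (cases "i \<in> {1..m}")
          case True
          then have h: "Df \<theta>s (axis (e i) 1) = - lam i + \<mu>" using Dl by blast
          show ?thesis using True by (simp add: h algebra_simps)
        next
          case False then have "i \<in> {m+1..K}" using i by auto
          then have h: "Df \<theta>s (axis (e i) 1) = \<mu>" using Dm by blast
          show ?thesis using False h by (auto simp: algebra_simps)
        qed
      qed simp
      also have "\<dots> = \<mu> * (\<Sum>i\<in>{1..K}. d $ e i) - (\<Sum>i\<in>{1..K} \<inter> {1..m}. lam i * d $ e i)"
        unfolding sum_subtractf sum_distrib_left[symmetric]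
        using sum.inter_restrict[of "{1..K}" "\<lambda>i. lam i * d $ e i" "{1..m}", symmetric] by simp
      also have "(\<Sum>i\<in>{1..K}. d $ e i) = 0" using sumd sum.reindex_bij_betw[OF e, of "\<lambda>j. d $ j"] by simp
      also have "{1..K} \<inter> {1..m} = {1..m}" using mK by auto
      finally show ?thesis by simp
    qed
    have L: "blinfun_apply (Df \<theta>s) d \<le> - lmin * s"
    proof -
      have "lmin * s = (\<Sum>i=1..m. lmin * d $ e i)" unfolding s_def by (simp add: sum_distrib_left)
      also have "\<dots> \<le> (\<Sum>i=1..m. lam i * d $ e i)"
        using l0le dpos by (intro sum_mono mult_right_mono) auto
      finally show ?thesis using first by simp
    qed
    have nd: "norm d < r" using th(2) unfolding d_def .
    have seg: "\<forall>t\<in>{0..1}. \<theta>s + t *\<^sub>R d \<in> U"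
    proof
      fix t :: real assume t: "t \<in> {0..1}"
      have "norm (t *\<^sub>R d) \<le> norm d" using t by (auto intro: mult_left_le_one_le)
      then have "dist \<theta>s (\<theta>s + t *\<^sub>R d) < r1" using nd r by (simp add: dist_norm)
      then show "\<theta>s + t *\<^sub>R d \<in> U" using r1 by auto
    qed
    obtain t where t: "t \<in> {0..1}"
      "H (\<theta>s + d) = H \<theta>s + Df \<theta>s d + 1/2 * D2f (\<theta>s + t *\<^sub>R d) d d"
      using taylor2[OF C2 seg U(1)] by blast
    define p where "p = \<theta>s + t *\<^sub>R d"
    have "norm (t *\<^sub>R d) \<le> norm d" using t by (auto intro: mult_left_le_one_le)
    then have "dist p \<theta>s < r2" using nd r unfolding p_def by (simp add: dist_norm)
    then have pe: "norm (D2f p - Q) < \<epsilon>" using r2 unfolding Q_def dist_norm by blast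
    have Qp: "D2f p d d \<le> Q d d + \<kappa>/4 * (norm d)^2"
    proof -
      have "D2f p d d - Q d d = (D2f p - Q) d d" by (simp add: blinfun.diff_left)
      also have "\<dots> \<le> \<bar>(D2f p - Q) d d\<bar>" by simp
      also have "\<dots> \<le> norm (D2f p - Q) * norm d * norm d" by (rule bil_bound)
      also have "\<dots> \<le> \<epsilon> * norm d * norm d" using pe by (intro mult_right_mono) auto
      finally show ?thesis unfolding \<epsilon>_def by (simp add: power2_eq_square)
    qed
    have dw: "d = w + rv" unfolding w_def by simp
    have Qd: "Q d d \<le> -\<kappa> * (norm w)^2 + 2 * M * norm w * norm rv + M * (norm rv)^2"
    proof -
      have "Q d d = Q w w + Q w rv + Q rv w + Q rv rv"
        unfolding dw by (simp add: blinfun.add_left blinfun.add_right)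
      moreover have "\<bar>Q w rv\<bar> \<le> M * norm w * norm rv" unfolding M_def by (rule bil_bound)
      moreover have "\<bar>Q rv w\<bar> \<le> M * norm w * norm rv" using bil_bound[of Q rv w] unfolding M_def by (simp add: mult_ac)
      moreover have "\<bar>Q rv rv\<bar> \<le> M * (norm rv)^2" using bil_bound[of Q rv rv] unfolding M_def by (simp add: power2_eq_square mult_ac)
      ultimately show ?thesis using Qw by linarith
    qed
    have ndt: "norm d \<le> norm w + norm rv" unfolding dw by (rule norm_triangle_ineq)
    have nwt: "norm w \<le> norm d + norm rv" unfolding w_def by (rule norm_triangle_ineq4)
    have sK: "s \<le> real K * norm d"
    proof -
      have "s \<le> (\<Sum>i=1..m. norm d)" unfolding s_def
        using component_le_norm_cart[of d] by (intro sum_mono) (meson abs_le_D1)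
      also have "\<dots> = real m * norm d" by simp
      also have "\<dots> \<le> real K * norm d" using mK by (intro mult_right_mono) auto
      finally show ?thesis .
    qed
    have Nd: "(2*M*(1+2*real K) + (2*M+\<kappa>)*real K) * norm d \<le> lmin/2"
    proof -
      have "N * norm d \<le> N * r3" using N0 nd r by (intro mult_left_mono) auto
      then show ?thesis using Nr3 unfolding N_def by simp
    qed
    have Heq: "H \<theta> = H \<theta>s + Df \<theta>s d + 1/2 * D2f p d d" using t(2) unfolding p_def d_def by simp
    have "H \<theta> \<le> H \<theta>s - lmin/2 * s - \<kappa>/4 * (\<Sum>i=m+1..K-1. (\<theta> $ e i - \<theta>s $ e i)^2)"
      by (rule final_arith[OF kap(1) M0 l0 s0 norm_ge_zero norm_ge_zero norm_ge_zero of_nat_0_le_iff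
            Heq L Qp Qd norm_rv ndt nwt sK Nd free_le])
    then show "H \<theta> \<le> H \<theta>s - lmin / 2 * (\<Sum>i=1..m. \<theta> $ e i) - \<kappa> / 4 * (\<Sum>i=m+1..K-1. (\<theta> $ e i - \<theta>s $ e i)^2)"
      using s_eq by simp
  qed
  show ?thesis using main r(1) l0 kap
    by (intro exI[of _ r] exI[of _ "lmin/2"] exI[of _ "\<kappa>/4"] conjI) auto
qed


lemma simplex_compact: "compact (prob_simplex :: (real^'n::finite) set)"
proof -
  have eq: "(prob_simplex :: (real^'n) set) = (\<Inter>i. {\<theta>. \<theta> $ i \<ge> 0}) \<inter> {\<theta>. (\<Sum>i\<in>UNIV. \<theta> $ i) = 1}"
    unfolding prob_simplex_def by auto
  have c1: "closed {\<theta>::real^'n. \<theta> $ i \<ge> 0}" for i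
    by (rule closed_Collect_le) (intro continuous_intros)+
  have c2: "closed {\<theta>::real^'n. (\<Sum>i\<in>UNIV. \<theta> $ i) = 1}"
    by (rule closed_Collect_eq) (intro continuous_intros)+
  have "closed (\<Inter>i. {\<theta>::real^'n. \<theta> $ i \<ge> 0})" using c1 by blast
  then have cl: "closed (prob_simplex :: (real^'n) set)" unfolding eq using c2 by (rule closed_Int)
  have "bounded (prob_simplex :: (real^'n) set)" unfolding bounded_iff
  proof (intro exI[of _ 1] ballI)
    fix x :: "real^'n" assume "x \<in> prob_simplex"
    then have "(\<Sum>i\<in>UNIV. \<bar>x $ i\<bar>) = 1" unfolding prob_simplex_def by simp
    then show "norm x \<le> 1" using norm_le_l1_cart[of x] by simp
  qed
  with cl show ?thesis by (simp add: compact_eq_bounded_closed)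
qed

lemma simplex_comp_le1: "\<theta> \<in> prob_simplex \<Longrightarrow> \<theta> $ j \<le> 1 \<and> \<theta> $ j \<ge> 0"
  unfolding prob_simplex_def
  by (metis (mono_tags, lifting) UNIV_I finite member_le_sum mem_Collect_eq)

lemma Tmap_nth:
  assumes e: "bij_betw e {1..K} (UNIV :: 'n::finite set)" and i: "i \<in> {1..K-1}"
  shows "Tmap e K y $ e i = y i"
proof -
  have inj: "inj_on e {1..K}" using e bij_betw_def by blast
  have "i \<in> {1..K}" "K \<in> {1..K}" "i \<noteq> K" using i by auto
  then have "e i \<noteq> e K" using inj_on_contraD[OF inj] by blast
  moreover have "inv_into {1..K} e (e i) = i" using inj \<open>i \<in> {1..K}\<close> by simp
  ultimately show ?thesis unfolding Tmap_def by simp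
qed

lemma Tmap_simplex:
  assumes e: "bij_betw e {1..K} (UNIV :: 'n::finite set)" and K: "K \<ge> 1"
    and y: "\<forall>i\<in>{1..K-1}. y i \<ge> 0" "(\<Sum>i=1..K-1. y i) \<le> 1"
  shows "Tmap e K y \<in> prob_simplex"
proof -
  have eK: "Tmap e K y $ e K = 1 - (\<Sum>i=1..K-1. y i)" unfolding Tmap_def by simp
  have split: "{1..K} = insert K {1..K-1}" using K by auto
  have "(\<Sum>j\<in>UNIV. Tmap e K y $ j) = (\<Sum>i\<in>{1..K}. Tmap e K y $ e i)"
    by (rule sum.reindex_bij_betw[OF e, symmetric])
  also have "\<dots> = Tmap e K y $ e K + (\<Sum>i\<in>{1..K-1}. Tmap e K y $ e i)"
    unfolding split by (subst sum.insert) auto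
  also have "(\<Sum>i\<in>{1..K-1}. Tmap e K y $ e i) = (\<Sum>i\<in>{1..K-1}. y i)"
    using Tmap_nth[OF e] by simp
  finally have s: "(\<Sum>j\<in>UNIV. Tmap e K y $ j) = 1" using eK by simp
  have "Tmap e K y $ j \<ge> 0" for j
  proof -
    obtain i where i: "i \<in> {1..K}" "j = e i" using e by (metis bij_betw_def imageE UNIV_I)
    show ?thesis
    proof (cases "i = K")
      case True then show ?thesis using i eK y by simp
    next
      case False then have "i \<in> {1..K-1}" using i by auto
      then show ?thesis using i Tmap_nth[OF e] y by simp
    qed
  qed
  with s show ?thesis unfolding prob_simplex_def by simp
qed

theorem lemma2:
  fixes H :: "real^'n \<Rightarrow> real" and \<theta>s :: "real^'n"
    and e :: "nat \<Rightarrow> 'n" and K m :: nat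
  assumes K: "CARD('n) = K" "K \<ge> 2"
    and e: "bij_betw e {1..K} UNIV"
    and th_simplex: "\<theta>s \<in> prob_simplex"
    and th_zero: "\<forall>i\<in>{1..m}. \<theta>s $ e i = 0"
    and th_pos: "\<forall>i\<in>{m+1..K}. \<theta>s $ e i > 0"
    and A1: "\<forall>\<theta>\<in>prob_simplex. \<theta> \<noteq> \<theta>s \<longrightarrow> H \<theta> < H \<theta>s"
    and A2_cont: "continuous_on prob_simplex H"
    and A2_C2: "\<exists>U Df D2f. open U \<and> \<theta>s \<in> U \<and> C2_with U H Df D2f \<and>
        (\<exists>lam \<mu>.
           (\<forall>i\<in>{1..m}. lam i > 0) \<and>
           (\<forall>i\<in>{1..m}. blinfun_apply (Df \<theta>s) (axis (e i) 1) = - lam i + \<mu>) \<and>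
           (\<forall>i\<in>{m+1..K}. blinfun_apply (Df \<theta>s) (axis (e i) 1) = \<mu>)) \<and>
        (\<forall>d::(real^'n).  d \<noteq> 0 \<and> (\<Sum>j\<in>UNIV. d $ j) = 0 \<and> (\<forall>i\<in>{1..m}. d $ e i = 0)
           \<longrightarrow> blinfun_apply (blinfun_apply (D2f \<theta>s) d) d < 0)"
  shows "\<exists>c1>0. \<exists>c2>0. \<forall>y :: nat \<Rightarrow> real.
           (\<forall>i\<in>{1..K-1}. y i \<ge> 0) \<and> (\<Sum>i=1..K-1. y i) \<le> 1 \<longrightarrow>
           H (Tmap e K y) \<le> H \<theta>s - c1 * (\<Sum>i=1..m. \<bar>y i - \<theta>s $ e i\<bar>)
                               - c2 * (\<Sum>i=m+1..K-1. \<bar>y i - \<theta>s $ e i\<bar>^2)"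
proof -
  have mK: "m < K"
  proof (rule ccontr)
    assume "\<not> m < K"
    then have "\<forall>i\<in>{1..K}. \<theta>s $ e i = 0" using th_zero by auto
    then have "(\<Sum>i\<in>{1..K}. \<theta>s $ e i) = 0" by simp
    moreover have "(\<Sum>i\<in>{1..K}. \<theta>s $ e i) = (\<Sum>j\<in>UNIV. \<theta>s $ j)"
      by (rule sum.reindex_bij_betw[OF e])
    ultimately show False using th_simplex unfolding prob_simplex_def by simp
  qed
  obtain U Df D2f lam \<mu> where U: "open U" "\<theta>s \<in> U" and C2: "C2_with U H Df D2f"
    and lam: "\<forall>i\<in>{1..m}. lam i > 0"
    and Dl: "\<forall>i\<in>{1..m}. blinfun_apply (Df \<theta>s) (axis (e i) 1) = - lam i + \<mu>"
    and Dm: "\<forall>i\<in>{m+1..K}. blinfun_apply (Df \<theta>s) (axis (e i) 1) = \<mu>"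
    and neg: "\<forall>d::(real^'n).  d \<noteq> 0 \<and> (\<Sum>j\<in>UNIV. d $ j) = 0 \<and> (\<forall>i\<in>{1..m}. d $ e i = 0)
           \<longrightarrow> blinfun_apply (blinfun_apply (D2f \<theta>s) d) d < 0"
    using A2_C2 by blast
  obtain r a b where rab: "r > 0" "a > 0" "b > 0" and loc: "\<forall>\<theta>\<in>prob_simplex. norm (\<theta> - \<theta>s) < r \<longrightarrow>
     H \<theta> \<le> H \<theta>s - a * (\<Sum>i=1..m. \<theta> $ e i) - b * (\<Sum>i=m+1..K-1. (\<theta> $ e i - \<theta>s $ e i)^2)"
    using local_bound[OF K e mK th_simplex th_zero U C2 lam Dl Dm neg] by blast
  define C where "C = prob_simplex \<inter> {\<theta>. r \<le> norm (\<theta> - \<theta>s)}"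
  have "\<exists>\<delta>>0. \<forall>\<theta>\<in>C. H \<theta> \<le> H \<theta>s - \<delta>"
  proof (cases "C = {}")
    case True then show ?thesis by (intro exI[of _ 1]) auto
  next
    case False
    have "closed {\<theta>::real^'n. r \<le> norm (\<theta> - \<theta>s)}"
      by (rule closed_Collect_le) (intro continuous_intros)+
    then have cC: "compact C" unfolding C_def by (rule compact_Int_closed[OF simplex_compact])
    have "continuous_on C H" using A2_cont unfolding C_def by (rule continuous_on_subset) auto
    then have cim: "compact (H ` C)" using cC by (rule compact_continuous_image)
    have "H ` C \<noteq> {}" using False by blast
    from compact_attains_sup[OF cim this] obtain z where
      z: "z \<in> H ` C" "\<forall>y\<in>H ` C. y \<le> z" by blast
    from z(1) obtain \<theta>1 where th1: "\<theta>1 \<in> C" "z = H \<theta>1" by blast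
    have "\<theta>1 \<noteq> \<theta>s" using th1 rab unfolding C_def by auto
    then have "H \<theta>1 < H \<theta>s" using A1 th1 unfolding C_def by auto
    then show ?thesis using z(2) th1 by (intro exI[of _ "H \<theta>s - H \<theta>1"]) auto
  qed
  then obtain \<delta> where \<delta>: "\<delta> > 0" "\<forall>\<theta>\<in>C. H \<theta> \<le> H \<theta>s - \<delta>" by blast
  define c1 where "c1 = min a (\<delta> / (2 * (real K + 1)))"
  define c2 where "c2 = min b (\<delta> / (2 * (real K + 1)))"
  have c1: "c1 > 0" "c1 \<le> a" "c1 \<le> \<delta> / (2 * (real K + 1))" unfolding c1_def using rab \<delta> by auto
  have c2: "c2 > 0" "c2 \<le> b" "c2 \<le> \<delta> / (2 * (real K + 1))" unfolding c2_def using rab \<delta> by auto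
  have main: "\<forall>y :: nat \<Rightarrow> real.
           (\<forall>i\<in>{1..K-1}. y i \<ge> 0) \<and> (\<Sum>i=1..K-1. y i) \<le> 1 \<longrightarrow>
           H (Tmap e K y) \<le> H \<theta>s - c1 * (\<Sum>i=1..m. \<bar>y i - \<theta>s $ e i\<bar>)
                               - c2 * (\<Sum>i=m+1..K-1. \<bar>y i - \<theta>s $ e i\<bar>^2)"
  proof (intro allI impI)
    fix y :: "nat \<Rightarrow> real"
    assume y: "(\<forall>i\<in>{1..K-1}. y i \<ge> 0) \<and> (\<Sum>i=1..K-1. y i) \<le> 1"
    define \<theta> where "\<theta> = Tmap e K y"
    have th: "\<theta> \<in> prob_simplex" unfolding \<theta>_def using Tmap_simplex[OF e _ ] y K by auto
    define P1 where "P1 = (\<Sum>i=1..m. \<bar>y i - \<theta>s $ e i\<bar>)"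
    define P2 where "P2 = (\<Sum>i=m+1..K-1. \<bar>y i - \<theta>s $ e i\<bar>^2)"
    have P1eq: "P1 = (\<Sum>i=1..m. \<theta> $ e i)" unfolding P1_def \<theta>_def
    proof (rule sum.cong)
      fix i assume i: "i \<in> {1..m}"
      then have i': "i \<in> {1..K-1}" using mK by auto
      show "\<bar>y i - \<theta>s $ e i\<bar> = Tmap e K y $ e i" using Tmap_nth[OF e i'] th_zero i y i' by auto
    qed simp
    have P2eq: "P2 = (\<Sum>i=m+1..K-1. (\<theta> $ e i - \<theta>s $ e i)^2)" unfolding P2_def \<theta>_def
      using Tmap_nth[OF e] by (intro sum.cong) auto
    have P1ge: "P1 \<ge> 0" "P2 \<ge> 0" unfolding P1_def P2_def by (auto intro: sum_nonneg)
    have yle: "\<bar>y i - \<theta>s $ e i\<bar> \<le> 1" if i: "i \<in> {1..K-1}" for i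
    proof -
      have "y i \<le> (\<Sum>i=1..K-1. y i)" using y i by (intro member_le_sum) auto
      then have "y i \<le> 1" using y by simp
      moreover have "0 \<le> y i" using y i by auto
      moreover have "0 \<le> \<theta>s $ e i" "\<theta>s $ e i \<le> 1" using simplex_comp_le1[OF th_simplex] by auto
      ultimately show ?thesis by auto
    qed
    have P1le: "P1 \<le> real K"
    proof -
      have "P1 \<le> real (card {1..m}) * 1" unfolding P1_def
        using yle mK by (intro sum_bounded_above) auto
      then show ?thesis using mK by simp
    qed
    have P2le: "P2 \<le> real K"
    proof -
      have "P2 \<le> real (card {m+1..K-1}) * 1" unfolding P2_def
      proof (intro sum_bounded_above)
        fix i assume "i \<in> {m+1..K-1}"
        then have "\<bar>y i - \<theta>s $ e i\<bar> \<le> 1" using yle mK by auto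
        then show "\<bar>y i - \<theta>s $ e i\<bar>^2 \<le> 1" by (intro power_le_one) auto
      qed
      then show ?thesis by simp
    qed
    have fin: "H \<theta> \<le> H \<theta>s - c1 * P1 - c2 * P2"
    proof (cases "norm (\<theta> - \<theta>s) < r")
      case True
      then have "H \<theta> \<le> H \<theta>s - a * P1 - b * P2" using loc th P1eq P2eq by simp
      moreover have "c1 * P1 \<le> a * P1" "c2 * P2 \<le> b * P2" using c1 c2 P1ge by (auto intro: mult_right_mono)
      ultimately show ?thesis by linarith
    next
      case False
      then have "H \<theta> \<le> H \<theta>s - \<delta>" using \<delta> th unfolding C_def by auto
      moreover have "c1 * P1 \<le> \<delta> / (2 * (real K + 1)) * real K"
        using c1 P1ge P1le by (intro mult_mono) auto
      moreover have "c2 * P2 \<le> \<delta> / (2 * (real K + 1)) * real K"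
        using c2 P1ge P2le by (intro mult_mono) auto
      moreover have "\<delta> / (2 * (real K + 1)) * real K \<le> \<delta> / 2"
        using \<delta> by (simp add: field_simps)
      ultimately show ?thesis by linarith
    qed
    then show "H (Tmap e K y) \<le> H \<theta>s - c1 * (\<Sum>i=1..m. \<bar>y i - \<theta>s $ e i\<bar>)
                               - c2 * (\<Sum>i=m+1..K-1. \<bar>y i - \<theta>s $ e i\<bar>^2)"
      unfolding \<theta>_def P1_def P2_def .
  qed
  show ?thesis using main c1(1) c2(1) by blast
qed
end
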